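(* Let $l_1,l_2,l_3$ be positive integers with $l_1=\min\{l_1,l_2,l_3\}$, $l_2\ge 2$, $l_3\ge 2$, let $G=\Theta(l_1,l_2,l_3)$, and let $L$ be an $m$-assignment for $G$ with $m\ge 3$. Suppose $q$ and $s$ are adjacent vertices of $G$, $x\in L(q)$, $y\in L(s)$, and $x\ne y$. Then there are at least $(m-1)^{l_1+l_2+l_3-5}(m-2)^2$ proper $L$-colorings of $G$ that color $q$ with $x$ and $s$ with $y$.
   Context: For positive integers $l_1,l_2,l_3$, the theta graph $\Theta(l_1,l_2,l_3)$ consists of two end vertices joined by three internally disjoint paths of lengths (numbers of edges) $l_1,l_2,l_3$. An $m$-assignment $L$ for a graph $G$ assigns to each vertex $v$ a set $L(v)$ of exactly $m$ colors; a proper $L$-coloring is a proper vertex coloring $f$ of $G$ with $f(v)\in L(v)$ for every vertex $v$. *)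

theory Defs
  imports Main
begin

text \<open>Vertices of the theta graph Theta(l1,l2,l3): the two end vertices and
  the internal vertex at position j (1 <= j <= l_i - 1) of path i (i = 1,2,3).\<close>
datatype tvert = EndA | EndB | Inner nat nat

definition path_len :: "nat \<Rightarrow> nat \<Rightarrow> nat \<Rightarrow> nat \<Rightarrow> nat" where
  "path_len l1 l2 l3 i = (if i = 1 then l1 else if i = 2 then l2 else l3)"

definition tpos :: "nat \<Rightarrow> nat \<Rightarrow> nat \<Rightarrow> nat \<Rightarrow> nat \<Rightarrow> tvert" where
  "tpos l1 l2 l3 i j = (if j = 0 then EndA else if j = path_len l1 l2 l3 i then EndB else Inner i j)"

definition theta_V :: "nat \<Rightarrow> nat \<Rightarrow> nat \<Rightarrow> tvert set" where
  "theta_V l1 l2 l3 = {EndA, EndB} \<union>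
     {Inner i j | i j. i \<in> {1,2,3} \<and> 1 \<le> j \<and> j < path_len l1 l2 l3 i}"

definition theta_E :: "nat \<Rightarrow> nat \<Rightarrow> nat \<Rightarrow> tvert set set" where
  "theta_E l1 l2 l3 = {{tpos l1 l2 l3 i j, tpos l1 l2 l3 i (Suc j)} | i j.
     i \<in> {1,2,3} \<and> j < path_len l1 l2 l3 i}"

text \<open>Proper L-colorings of a graph (V,E), taken extensionally (undefined off V)
  so that they can be counted.\<close>
definition proper_L_colorings :: "'v set \<Rightarrow> 'v set set \<Rightarrow> ('v \<Rightarrow> 'c set) \<Rightarrow> ('v \<Rightarrow> 'c) set" where
  "proper_L_colorings V E L = {f. (\<forall>v\<in>V. f v \<in> L v) \<and> (\<forall>v. v \<notin> V \<longrightarrow> f v = undefined)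
      \<and> (\<forall>u v. {u, v} \<in> E \<and> u \<noteq> v \<longrightarrow> f u \<noteq> f v)}"

end

theory Submission
  imports Defs "HOL-Library.FuncSet"
begin


definition colS :: "'v set set \<Rightarrow> ('v \<Rightarrow> 'c set) \<Rightarrow> ('v \<Rightarrow> 'c) \<Rightarrow> 'v set \<Rightarrow> 'v set \<Rightarrow> ('v \<Rightarrow> 'c) set" where
  "colS E L c P S = {f. (\<forall>v\<in>S. f v \<in> L v) \<and> (\<forall>v. v \<notin> S \<longrightarrow> f v = undefined)
     \<and> (\<forall>u w. u \<in> S \<longrightarrow> w \<in> S \<longrightarrow> {u, w} \<in> E \<longrightarrow> u \<noteq> w \<longrightarrow> f u \<noteq> f w) \<and> (\<forall>v\<in>P. f v = c v)}"

lemma colS_finite: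
  assumes "finite S" "\<forall>v\<in>S. finite (L v)"
  shows "finite (colS E L c P S)"
proof -
  have "colS E L c P S \<subseteq> PiE S L" by (auto simp: colS_def PiE_def extensional_def Pi_def)
  moreover have "finite (PiE S L)" using assms by (intro finite_PiE) auto
  ultimately show ?thesis using finite_subset by blast
qed

lemma step:
  assumes fin: "finite S" and finL: "finite (L v)" and finLS: "\<forall>u\<in>S. finite (L u)"
    and vS: "v \<notin> S" and vP: "v \<notin> P"
    and cardN: "card {u\<in>S. {u,v}\<in>E \<and> u\<noteq>v} \<le> d" and cL: "card (L v) = m"
  shows "card (colS E L c P S) * (m - d) \<le> card (colS E L c P (insert v S))"
proof -
  define N where "N = {u\<in>S. {u,v}\<in>E \<and> u\<noteq>v}"
  define C where "C = colS E L c P S"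
  define Sig where "Sig = (SIGMA g:C. L v - g ` N)"
  define F where "F = (\<lambda>(g::'a \<Rightarrow> 'b, a::'b). g(v:=a))"
  have finC: "finite C" unfolding C_def using colS_finite fin finLS by blast
  have finN: "finite N" using fin unfolding N_def by simp
  have finC2: "finite (colS E L c P (insert v S))" using colS_finite fin finLS finL by (metis finite_insert insert_iff)
  have sub: "F ` Sig \<subseteq> colS E L c P (insert v S)"
  proof
    fix f assume "f \<in> F ` Sig"
    then obtain g a where g: "g \<in> C" and a: "a \<in> L v" "a \<notin> g ` N" and f: "f = g(v:=a)"
      unfolding Sig_def F_def by auto
    have gS: "\<forall>w\<in>S. g w \<in> L w" "\<forall>w. w \<notin> S \<longrightarrow> g w = undefined"
      "\<forall>u w. u \<in> S \<longrightarrow> w \<in> S \<longrightarrow> {u, w} \<in> E \<longrightarrow> u \<noteq> w \<longrightarrow> g u \<noteq> g w" "\<forall>w\<in>P. g w = c w"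
      using g unfolding C_def colS_def by auto
    have pr: "f u \<noteq> f w" if h: "u \<in> insert v S" "w \<in> insert v S" "{u, w} \<in> E" "u \<noteq> w" for u w
    proof -
      consider "u = v" "w \<in> S" | "w = v" "u \<in> S" | "u \<in> S" "w \<in> S" using h(1,2,4) by blast
      then show ?thesis
      proof cases
        case 1
        then have "w \<in> N" using h unfolding N_def by (auto simp: insert_commute)
        then show ?thesis using 1 a f vS by auto
      next
        case 2
        then have "u \<in> N" using h unfolding N_def by (auto simp: insert_commute)
        then show ?thesis using 2 a f vS by auto
      next
        case 3
        then show ?thesis using gS(3) h f vS by auto
      qed
    qed
    have A1: "\<forall>w\<in>insert v S. f w \<in> L w" using gS(1) a f by auto
    have A2: "\<forall>w. w \<notin> insert v S \<longrightarrow> f w = undefined" using gS(2) f by auto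
    have A3: "\<forall>w\<in>P. f w = c w" using gS(4) f vP by auto
    show "f \<in> colS E L c P (insert v S)"
      unfolding colS_def using A1 A2 A3 pr by blast
  qed
  have inj: "inj_on F Sig"
  proof (rule inj_onI)
    fix p1 p2 assume p1: "p1 \<in> Sig" and p2: "p2 \<in> Sig" and e: "F p1 = F p2"
    obtain g1 a1 where 1: "p1 = (g1, a1)" "g1 \<in> C" using p1 unfolding Sig_def by auto
    obtain g2 a2 where 2: "p2 = (g2, a2)" "g2 \<in> C" using p2 unfolding Sig_def by auto
    have "g1 v = undefined" "g2 v = undefined" using 1 2 vS unfolding C_def colS_def by auto
    moreover have "g1(v:=a1) = g2(v:=a2)" using e 1 2 unfolding F_def by auto
    ultimately have "a1 = a2" "g1 = g2" by (metis fun_upd_same, metis fun_upd_triv fun_upd_upd)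
    then show "p1 = p2" using 1 2 by simp
  qed
  have cardSig: "card Sig = (\<Sum>g\<in>C. card (L v - g ` N))"
    unfolding Sig_def using finC finL by (intro card_SigmaI) auto
  have each: "m - d \<le> card (L v - g ` N)" for g
  proof -
    have "card (g ` N) \<le> d" using card_image_le[OF finN, of g] cardN unfolding N_def by linarith
    moreover have "card (L v) - card (g ` N) \<le> card (L v - g ` N)"
      using finN by (intro diff_card_le_card_Diff) auto
    ultimately show ?thesis using cL by linarith
  qed
  have "card C * (m - d) = (\<Sum>g\<in>C. m - d)" by simp
  also have "\<dots> \<le> card Sig" unfolding cardSig by (intro sum_mono each)
  also have "\<dots> = card (F ` Sig)" using card_image[OF inj] by simp
  also have "\<dots> \<le> card (colS E L c P (insert v S))" by (intro card_mono finC2 sub)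
  finally show ?thesis unfolding C_def .
qed

lemma greedy:
  assumes finV: "finite V" and PV: "P \<subseteq> V" and finL: "\<forall>v\<in>V. finite (L v) \<and> card (L v) = m"
    and rpos: "\<forall>v\<in>V-P. 0 < r v" and rinj: "inj_on r (V-P)" and rP: "\<forall>v\<in>P. r v = (0::nat)"
    and deg: "\<forall>v\<in>V-P. card {u\<in>V. {u,v}\<in>E \<and> u\<noteq>v \<and> r u < r v} \<le> d v"
  shows "card (colS E L c P P) * (\<Prod>v\<in>V-P. (m - d v)) \<le> card (colS E L c P V)"
proof -
  have main: "card (colS E L c P P) * (\<Prod>v\<in>{v\<in>V-P. r v \<le> n}. (m - d v))
      \<le> card (colS E L c P (P \<union> {v\<in>V-P. r v \<le> n}))" for n
  proof (induction n)
    case 0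
    have e: "{v\<in>V-P. r v \<le> 0} = {}" using rpos by force
    show ?case unfolding e by simp
  next
    case (Suc n)
    show ?case
    proof (cases "\<exists>v\<in>V-P. r v = Suc n")
      case False
      then have "{v\<in>V-P. r v \<le> Suc n} = {v\<in>V-P. r v \<le> n}" by (auto simp: le_Suc_eq)
      with Suc show ?thesis by simp
    next
      case True
      then obtain v where v: "v\<in>V-P" "r v = Suc n" by blast
      define Ow where "Ow = {v\<in>V-P. r v \<le> n}"
      have eq: "{v\<in>V-P. r v \<le> Suc n} = insert v Ow"
      proof (intro equalityI subsetI)
        fix w assume w: "w \<in> {v\<in>V-P. r v \<le> Suc n}"
        show "w \<in> insert v Ow"
        proof (cases "r w = Suc n")
          case True
          then have "w = v" using inj_onD[OF rinj, of w v] v w by simp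
          then show ?thesis by simp
        next
          case False
          then show ?thesis using w unfolding Ow_def by simp
        qed
      next
        fix w assume "w \<in> insert v Ow"
        then show "w \<in> {v\<in>V-P. r v \<le> Suc n}" using v unfolding Ow_def by auto
      qed
      have vO: "v \<notin> Ow" using v unfolding Ow_def by auto
      have finO: "finite Ow" using finV unfolding Ow_def by auto
      have N: "{u\<in>P \<union> Ow. {u,v}\<in>E \<and> u\<noteq>v} \<subseteq> {u\<in>V. {u,v}\<in>E \<and> u\<noteq>v \<and> r u < r v}"
        using PV rP v unfolding Ow_def by auto
      have finS: "finite {u\<in>V. {u,v}\<in>E \<and> u\<noteq>v \<and> r u < r v}" using finV by simp
      have "card {u\<in>P \<union> Ow. {u,v}\<in>E \<and> u\<noteq>v} \<le> card {u\<in>V. {u,v}\<in>E \<and> u\<noteq>v \<and> r u < r v}"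
        by (rule card_mono[OF finS N])
      also have "\<dots> \<le> d v" using deg v by blast
      finally have "card {u\<in>P \<union> Ow. {u,v}\<in>E \<and> u\<noteq>v} \<le> d v" .
      moreover have "finite (P \<union> Ow)" using finO PV finV finite_subset by blast
      moreover have "\<forall>u\<in>P \<union> Ow. finite (L u)" using finL PV unfolding Ow_def by auto
      ultimately have st: "card (colS E L c P (P \<union> Ow)) * (m - d v) \<le> card (colS E L c P (insert v (P \<union> Ow)))"
        using v finL vO by (intro step) auto
      have "card (colS E L c P P) * (\<Prod>v\<in>insert v Ow. (m - d v))
          = card (colS E L c P P) * (\<Prod>v\<in>Ow. (m - d v)) * (m - d v)"
        using finO vO by simp
      also have "\<dots> \<le> card (colS E L c P (P \<union> Ow)) * (m - d v)"
        using Suc.IH unfolding Ow_def by (intro mult_right_mono) auto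
      also have "\<dots> \<le> card (colS E L c P (insert v (P \<union> Ow)))" by (rule st)
      finally show ?thesis using eq by simp
    qed
  qed
  define n where "n = Max (r ` V)"
  have "\<forall>v\<in>V. r v \<le> n" unfolding n_def using finV by auto
  then have "{v\<in>V-P. r v \<le> n} = V - P" by auto
  moreover have "P \<union> (V - P) = V" using PV by auto
  ultimately show ?thesis using main[of n] by simp
qed




locale th =
  fixes l1 l2 l3 i t k j :: nat
  assumes abc: "\<forall>a\<in>{1,2,3}. a = i \<or> a = t \<or> a = k"
    and idx: "i \<in> {1,2,3}" "t \<in> {1,2,3}" "k \<in> {1,2,3}"
    and dist: "i \<noteq> t" "i \<noteq> k" "t \<noteq> k"
    and lens: "\<forall>a\<in>{1,2,3}. path_len l1 l2 l3 a \<ge> 1"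
    and lt: "path_len l1 l2 l3 t \<ge> 2"
    and c3: "path_len l1 l2 l3 i + path_len l1 l2 l3 k \<ge> 3"
    and jl: "j < path_len l1 l2 l3 i"
begin

abbreviation len where "len a \<equiv> path_len l1 l2 l3 a"
abbreviation tp where "tp a p \<equiv> tpos l1 l2 l3 a p"

definition cl where "cl = len i + len k"
definition cyc :: "nat \<Rightarrow> tvert" where
  "cyc z = (if z = 0 then EndA else if z < len i then Inner i z else if z = len i then EndB else Inner k (cl - z))"
definition R where "R z = (if z = j \<or> z = j+1 then 0 else if j+1 < z then z - j - 1 else z + cl - j - 1)"
definition rk :: "tvert \<Rightarrow> nat" where
  "rk v = (case v of EndA \<Rightarrow> R 0 | EndB \<Rightarrow> R (len i)
      | Inner a p \<Rightarrow> if a = t then cl - 2 + p else if a = i then R p else R (cl - p))"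
definition sc where "sc z = (if z + 1 = cl then 0 else z + 1)"
definition pr where "pr z = (if z = 0 then cl - 1 else z - 1)"
definition w1 where "w1 = cyc (pr j)"
definition w2 where "w2 = Inner t (len t - 1)"
definition dd where "dd v = (if v = w1 \<or> v = w2 then 2 else (1::nat))"

lemma li: "len i \<ge> 1" and lk: "len k \<ge> 1" using lens idx by auto
lemma cl3: "cl \<ge> 3" using c3 cl_def by simp
lemma jcl: "j + 2 \<le> cl" using jl lk cl_def by simp

lemma cyc_inj: "z < cl \<Longrightarrow> z' < cl \<Longrightarrow> cyc z = cyc z' \<Longrightarrow> z = z'"
  unfolding cyc_def using dist cl_def by (auto split: if_splits)

lemma cyc_ne_t: "cyc z \<noteq> Inner t p"
  unfolding cyc_def using dist by auto

lemma rk_cyc: "z < cl \<Longrightarrow> rk (cyc z) = R z"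
  unfolding cyc_def rk_def using dist by (auto simp: cl_def)

lemma rk_t: "rk (Inner t p) = cl - 2 + p"
  unfolding rk_def by simp

lemma tp_i: "p \<le> len i \<Longrightarrow> tp i p = cyc p"
  unfolding tpos_def cyc_def by auto

lemma tp_k: "p \<le> len k \<Longrightarrow> tp k p = cyc (if p = 0 then 0 else cl - p)"
  unfolding tpos_def cyc_def using lk li by (auto simp: cl_def)

lemma R_le: "z < cl \<Longrightarrow> R z \<le> cl - 2"
  unfolding R_def using jcl by auto

lemma R_pos: "z < cl \<Longrightarrow> z \<noteq> j \<Longrightarrow> z \<noteq> j + 1 \<Longrightarrow> 0 < R z"
  unfolding R_def using jcl by auto

lemma R_inj: "z < cl \<Longrightarrow> z' < cl \<Longrightarrow> z \<noteq> j \<Longrightarrow> z \<noteq> j + 1 \<Longrightarrow> z' \<noteq> j \<Longrightarrow> z' \<noteq> j + 1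
   \<Longrightarrow> R z = R z' \<Longrightarrow> z = z'"
  unfolding R_def using jcl by (auto split: if_splits)

lemma sc_lt: "z < cl \<Longrightarrow> sc z < cl" unfolding sc_def using cl3 by auto
lemma pr_lt: "z < cl \<Longrightarrow> pr z < cl" unfolding pr_def using cl3 by auto
lemma pr_sc: "z < cl \<Longrightarrow> pr (sc z) = z" unfolding pr_def sc_def using cl3 by auto

lemma R_sc: "z < cl \<Longrightarrow> z \<noteq> j \<Longrightarrow> z \<noteq> j + 1 \<Longrightarrow> R (sc z) < R z \<Longrightarrow> sc z = j"
  unfolding R_def sc_def using jcl by (auto split: if_splits)

lemma sc_j: "z < cl \<Longrightarrow> sc z = j \<Longrightarrow> z = pr j"
  unfolding sc_def pr_def using jcl by (auto split: if_splits)

lemma pr_j: "pr j \<noteq> j" "pr j \<noteq> j + 1" "pr j < cl"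
  unfolding pr_def using jcl cl3 by auto

lemma V_cases:
  assumes "v \<in> theta_V l1 l2 l3"
  shows "(\<exists>z<cl. v = cyc z) \<or> (\<exists>p. 1 \<le> p \<and> p < len t \<and> v = Inner t p)"
proof -
  consider "v = EndA" | "v = EndB" | a p where "v = Inner a p" "a \<in> {1,2,3}" "1 \<le> p" "p < len a"
    using assms unfolding theta_V_def by blast
  then show ?thesis
  proof cases
    case 1
    then have "v = cyc 0" unfolding cyc_def by simp
    then show ?thesis using cl3 by (intro disjI1 exI[of _ 0]) auto
  next
    case 2
    then have "v = cyc (len i)" using li unfolding cyc_def by simp
    then show ?thesis using lk cl_def by (intro disjI1 exI[of _ "len i"]) auto
  next
    case 3
    then consider "a = i" | "a = t" | "a = k" using abc by blast
    then show ?thesis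
    proof cases
      case 1
      then have "v = cyc p" using 3 unfolding cyc_def by simp
      then show ?thesis using 1 3 cl_def by (intro disjI1 exI[of _ p]) auto
    next
      case 2
      then show ?thesis using 3 by auto
    next
      case k: 3
      then have "v = cyc (cl - p)" using 3 unfolding cyc_def cl_def by auto
      then show ?thesis using k 3 cl_def by (intro disjI1 exI[of _ "cl - p"]) auto
    qed
  qed
qed

lemma cyc_V: "z < cl \<Longrightarrow> cyc z \<in> theta_V l1 l2 l3"
  unfolding cyc_def theta_V_def using idx by (auto simp: cl_def)

lemma t_V: "1 \<le> p \<Longrightarrow> p < len t \<Longrightarrow> Inner t p \<in> theta_V l1 l2 l3"
  unfolding theta_V_def using idx by auto

lemma tp_t_V: "p \<le> len t \<Longrightarrow> tp t p \<in> theta_V l1 l2 l3"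
  unfolding tpos_def theta_V_def using idx by auto

lemma E_cases:
  assumes "e \<in> theta_E l1 l2 l3"
  shows "(\<exists>z<cl. e = {cyc z, cyc (sc z)}) \<or> (\<exists>p<len t. e = {tp t p, tp t (Suc p)})"
proof -
  obtain a p where ap: "e = {tp a p, tp a (Suc p)}" "a \<in> {1,2,3}" "p < len a"
    using assms unfolding theta_E_def by blast
  consider "a = i" | "a = t" | "a = k" using abc ap by blast
  then show ?thesis
  proof cases
    case 1
    have "sc p = Suc p" unfolding sc_def using ap 1 cl_def lk by auto
    then have "e = {cyc p, cyc (sc p)}" using ap 1 tp_i by simp
    then show ?thesis using ap 1 cl_def lk by (intro disjI1 exI[of _ p]) auto
  next
    case 2
    then show ?thesis using ap by auto
  next
    case 3
    define z where "z = cl - p - 1"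
    have z: "z < cl" using z_def cl3 by simp
    have a: "tp k (Suc p) = cyc z" using tp_k[of "Suc p"] ap 3 z_def by simp
    have scz: "sc z = (if p = 0 then 0 else cl - p)" unfolding sc_def z_def using ap 3 cl_def lk by auto
    have b: "tp k p = cyc (sc z)" using tp_k[of p] ap 3 scz by simp
    have "e = {cyc z, cyc (sc z)}" using ap 3 a b by auto
    then show ?thesis using z by (intro disjI1 exI[of _ z]) auto
  qed
qed

lemma E_V: "e \<in> theta_E l1 l2 l3 \<Longrightarrow> e \<subseteq> theta_V l1 l2 l3"
  using E_cases[of e] cyc_V sc_lt tp_t_V by fastforce


lemma EndA_cyc: "EndA = cyc 0" by (simp add: cyc_def)
lemma EndB_cyc: "EndB = cyc (len i)" using li by (simp add: cyc_def)
lemma rk_A: "rk EndA \<le> cl - 2" using rk_cyc[of 0] R_le[of 0] cl3 EndA_cyc by simp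
lemma rk_B: "rk EndB \<le> cl - 2" using rk_cyc[of "len i"] R_le[of "len i"] lk EndB_cyc cl_def by simp

lemma tp_t: "tp t p = (if p = 0 then EndA else if p = len t then EndB else Inner t p)"
  unfolding tpos_def by simp

lemma deg:
  assumes v: "v \<in> theta_V l1 l2 l3" "v \<notin> {cyc j, cyc (j+1)}"
  shows "card {u\<in>theta_V l1 l2 l3. {u,v}\<in>theta_E l1 l2 l3 \<and> u\<noteq>v \<and> rk u < rk v} \<le> dd v"
proof -
  let ?B = "{u\<in>theta_V l1 l2 l3. {u,v}\<in>theta_E l1 l2 l3 \<and> u\<noteq>v \<and> rk u < rk v}"
  from V_cases[OF v(1)] consider (c) z where "z<cl" "v = cyc z" | (e) p where "1\<le>p" "p<len t" "v = Inner t p"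
    by blast
  then show ?thesis
  proof cases
    case c
    have zj: "z \<noteq> j" "z \<noteq> j+1" using v c by auto
    have rv: "rk v = R z" using rk_cyc c by simp
    have rvle: "rk v \<le> cl - 2" using rv R_le c by simp
    define S where "S = {cyc (pr z)} \<union> (if z = pr j then {cyc j} else {})"
    have sub: "?B \<subseteq> S"
    proof
      fix u assume u: "u \<in> ?B"
      then have uE: "{u,v} \<in> theta_E l1 l2 l3" "rk u < rk v" by auto
      from E_cases[OF uE(1)] show "u \<in> S"
      proof (elim disjE exE conjE)
        fix z' assume z': "z' < cl" "{u,v} = {cyc z', cyc (sc z')}"
        then have "(u = cyc z' \<and> v = cyc (sc z')) \<or> (u = cyc (sc z') \<and> v = cyc z')"
          by (auto simp: doubleton_eq_iff)
        then show ?thesis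
        proof
          assume h: "u = cyc z' \<and> v = cyc (sc z')"
          then have "z = sc z'" using cyc_inj c sc_lt z' by metis
          then have "pr z = z'" using pr_sc z' by simp
          then show ?thesis using h unfolding S_def by simp
        next
          assume h: "u = cyc (sc z') \<and> v = cyc z'"
          then have zz: "z = z'" using cyc_inj c z' by metis
          have "rk u = R (sc z)" using h zz rk_cyc sc_lt c by simp
          then have "R (sc z) < R z" using uE(2) rv by simp
          then have scj: "sc z = j" using R_sc c zj by blast
          then have "z = pr j" using sc_j c by blast
          then show ?thesis using h scj zz unfolding S_def by simp
        qed
      next
        fix p assume p: "p < len t" "{u,v} = {tp t p, tp t (Suc p)}"
        then have "(u = tp t p \<and> v = tp t (Suc p)) \<or> (u = tp t (Suc p) \<and> v = tp t p)"
          by (auto simp: doubleton_eq_iff)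
        then show ?thesis
        proof
          assume h: "u = tp t p \<and> v = tp t (Suc p)"
          have "Suc p = len t"
          proof (rule ccontr)
            assume "Suc p \<noteq> len t"
            then have "v = Inner t (Suc p)" using h tp_t[of "Suc p"] by simp
            then show False using c cyc_ne_t by simp
          qed
          then have "u = Inner t p" "1 \<le> p" using h tp_t[of p] lt by auto
          then have "rk u \<ge> cl - 1" using rk_t by simp
          then show ?thesis using uE(2) rvle cl3 by simp
        next
          assume h: "u = tp t (Suc p) \<and> v = tp t p"
          have "p = 0"
          proof (rule ccontr)
            assume "p \<noteq> 0"
            then have "v = Inner t p" using h tp_t[of p] p by simp
            then show False using c cyc_ne_t by simp
          qed
          then have "u = Inner t 1" using h tp_t[of 1] lt by auto
          then have "rk u \<ge> cl - 1" using rk_t by simp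
          then show ?thesis using uE(2) rvle cl3 by simp
        qed
      qed
    qed
    have "card ?B \<le> card S" by (rule card_mono[OF _ sub]) (simp add: S_def)
    moreover have "card S \<le> dd v"
    proof (cases "z = pr j")
      case True
      then have "v = w1" using c w1_def by simp
      then show ?thesis unfolding S_def dd_def using True by (simp add: card_insert_if)
    next
      case False
      have "v \<noteq> w1" using False c cyc_inj pr_j(3) unfolding w1_def by metis
      moreover have "v \<noteq> w2" using c cyc_ne_t unfolding w2_def by simp
      ultimately show ?thesis unfolding S_def dd_def using False by simp
    qed
    ultimately show ?thesis by simp
  next
    case e
    have rv: "rk v = cl - 2 + p" using e rk_t by simp
    define S where "S = {tp t (p - 1)} \<union> (if p = len t - 1 then {EndB} else {})"
    have sub: "?B \<subseteq> S"
    proof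
      fix u assume u: "u \<in> ?B"
      then have uE: "{u,v} \<in> theta_E l1 l2 l3" "rk u < rk v" by auto
      from E_cases[OF uE(1)] show "u \<in> S"
      proof (elim disjE exE conjE)
        fix z' assume z': "z' < cl" "{u,v} = {cyc z', cyc (sc z')}"
        then have "v = cyc z' \<or> v = cyc (sc z')" by (auto simp: doubleton_eq_iff)
        then show ?thesis using e cyc_ne_t by metis
      next
        fix p' assume p': "p' < len t" "{u,v} = {tp t p', tp t (Suc p')}"
        then have "(u = tp t p' \<and> v = tp t (Suc p')) \<or> (u = tp t (Suc p') \<and> v = tp t p')"
          by (auto simp: doubleton_eq_iff)
        then show ?thesis
        proof
          assume h: "u = tp t p' \<and> v = tp t (Suc p')"
          then have "Suc p' = p" using e tp_t[of "Suc p'"] by (auto split: if_splits)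
          then have "p' = p - 1" by simp
          then have "u = tp t (p - 1)" using h by simp
          then show ?thesis unfolding S_def by simp
        next
          assume h: "u = tp t (Suc p') \<and> v = tp t p'"
          then have pp: "p' = p" using e tp_t[of "p'"] by (auto split: if_splits)
          show ?thesis
          proof (cases "Suc p = len t")
            case True
            then show ?thesis using h pp tp_t[of "Suc p"] unfolding S_def by auto
          next
            case False
            then have "u = Inner t (Suc p)" using h pp tp_t[of "Suc p"] by simp
            then have "rk u = cl - 2 + Suc p" using rk_t by simp
            then show ?thesis using uE(2) rv cl3 by simp
          qed
        qed
      qed
    qed
    have "card ?B \<le> card S" by (rule card_mono[OF _ sub]) (simp add: S_def)
    moreover have "card S \<le> dd v"
    proof (cases "p = len t - 1")
      case True
      then have "v = w2" using e w2_def by simp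
      then show ?thesis unfolding S_def dd_def using True by (simp add: card_insert_if)
    next
      case False
      have "v \<noteq> w1" using e cyc_ne_t unfolding w1_def by metis
      moreover have "v \<noteq> w2" using e False unfolding w2_def by simp
      ultimately show ?thesis unfolding S_def dd_def using False by simp
    qed
    ultimately show ?thesis by simp
  qed
qed

end



context th begin

lemma final:
  assumes qs: "{q,s} = {tp i j, tp i (Suc j)}" and m: "m \<ge> 3"
    and L: "\<forall>v\<in>theta_V l1 l2 l3. finite (L v) \<and> card (L v) = m"
    and x: "x \<in> L q" and y: "y \<in> L s" and xy: "x \<noteq> y"
  shows "(m-1)^(card (theta_V l1 l2 l3) - 4) * (m-2)^2
     \<le> card {f \<in> proper_L_colorings (theta_V l1 l2 l3) (theta_E l1 l2 l3) L. f q = x \<and> f s = y}"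
proof -
  define V where "V = theta_V l1 l2 l3"
  define E where "E = theta_E l1 l2 l3"
  define P where "P = {q, s}"
  define c0 where "c0 = (\<lambda>v. if v = q then x else y)"
  have P: "P = {cyc j, cyc (j+1)}" using qs tp_i jl unfolding P_def by simp
  have jj: "j < cl" "j + 1 < cl" using jcl by auto
  have cjne: "cyc j \<noteq> cyc (j+1)" using cyc_inj jj by fastforce
  have qsne: "q \<noteq> s" using P cjne unfolding P_def by (auto simp: doubleton_eq_iff)
  have finV: "finite V"
  proof -
    have "V \<subseteq> cyc ` {..<cl} \<union> Inner t ` {..<len t}" using V_cases unfolding V_def by fastforce
    then show ?thesis by (rule finite_subset) auto
  qed
  have PV: "P \<subseteq> V" using P cyc_V jj unfolding V_def by auto
  have EV: "\<forall>e\<in>E. e \<subseteq> V" using E_V unfolding E_def V_def by blast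
  have target: "{f \<in> proper_L_colorings V E L. f q = x \<and> f s = y} = colS E L c0 P V"
  proof -
    have "(\<forall>u v. {u, v} \<in> E \<and> u \<noteq> v \<longrightarrow> f u \<noteq> f v) \<longleftrightarrow>
          (\<forall>u w. u \<in> V \<longrightarrow> w \<in> V \<longrightarrow> {u, w} \<in> E \<longrightarrow> u \<noteq> w \<longrightarrow> f u \<noteq> f w)" for f :: "tvert \<Rightarrow> 'a"
      using EV by blast
    moreover have "(f q = x \<and> f s = y) \<longleftrightarrow> (\<forall>v\<in>P. f v = c0 v)" for f :: "tvert \<Rightarrow> 'a"
      using qsne unfolding P_def c0_def by auto
    ultimately show ?thesis unfolding proper_L_colorings_def colS_def by blast
  qed
  have one: "1 \<le> card (colS E L c0 P P)"
  proof -
    define f0 where "f0 = (\<lambda>v. if v = q then x else if v = s then y else undefined)"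
    have "f0 \<in> colS E L c0 P P"
      unfolding colS_def f0_def c0_def P_def using x y xy qsne by auto
    moreover have "finite (colS E L c0 P P)"
      using colS_finite[of P L] PV L finite_subset finV unfolding V_def by blast
    ultimately show ?thesis by (metis One_nat_def Suc_leI card_gt_0_iff empty_iff)
  qed
  have rpos: "\<forall>v\<in>V-P. 0 < rk v"
  proof
    fix v assume v: "v \<in> V - P"
    from V_cases v consider (c) z where "z<cl" "v = cyc z" | (e) p where "1\<le>p" "p<len t" "v = Inner t p"
      unfolding V_def by blast
    then show "0 < rk v"
    proof cases
      case c
      then have "z \<noteq> j" "z \<noteq> j + 1" using v P by auto
      then show ?thesis using c rk_cyc R_pos by simp
    next
      case e
      then show ?thesis using rk_t cl3 by simp
    qed
  qed
  have rinj: "inj_on rk (V-P)"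
  proof (rule inj_onI)
    fix u v assume u: "u \<in> V - P" and v: "v \<in> V - P" and e: "rk u = rk v"
    from V_cases u consider (c) z where "z<cl" "u = cyc z" | (e) p where "1\<le>p" "p<len t" "u = Inner t p"
      unfolding V_def by blast
    then show "u = v"
    proof cases
      case c
      then have zj: "z \<noteq> j" "z \<noteq> j + 1" using u P by auto
      from V_cases v consider (c') z' where "z'<cl" "v = cyc z'" | (e') p' where "1\<le>p'" "p'<len t" "v = Inner t p'"
        unfolding V_def by blast
      then show ?thesis
      proof cases
        case c'
        then have "z' \<noteq> j" "z' \<noteq> j + 1" using v P by auto
        then show ?thesis using R_inj[of z z'] c c' zj e rk_cyc by simp
      next
        case e'
        then show ?thesis using e c rk_cyc rk_t R_le[of z] cl3 by simp
      qed
    next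
      case e
      from V_cases v consider (c') z' where "z'<cl" "v = cyc z'" | (e') p' where "1\<le>p'" "p'<len t" "v = Inner t p'"
        unfolding V_def by blast
      then show ?thesis
      proof cases
        case c'
        then show ?thesis using \<open>rk u = rk v\<close> e rk_cyc rk_t R_le[of z'] cl3 by simp
      next
        case e'
        then show ?thesis using \<open>rk u = rk v\<close> e rk_t by simp
      qed
    qed
  qed
  have rP: "\<forall>v\<in>P. rk v = 0" using P rk_cyc jj unfolding R_def by auto
  have degs: "\<forall>v\<in>V-P. card {u\<in>V. {u,v}\<in>E \<and> u\<noteq>v \<and> rk u < rk v} \<le> dd v"
    using deg P unfolding V_def E_def by blast
  have LV: "\<forall>v\<in>V. finite (L v) \<and> card (L v) = m" using L unfolding V_def by blast
  have gr: "card (colS E L c0 P P) * (\<Prod>v\<in>V-P. (m - dd v)) \<le> card (colS E L c0 P V)"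
    by (rule greedy[OF finV PV LV rpos rinj rP degs])
  have w1V: "w1 \<in> V - P" using pr_j cyc_V cyc_inj jj P unfolding w1_def V_def by auto
  have w2P: "Inner t (len t - 1) \<notin> P" using P cyc_ne_t by (metis insert_iff empty_iff)
  have w2V: "w2 \<in> V - P" using t_V lt w2P unfolding w2_def V_def by auto
  have w12: "w1 \<noteq> w2" using cyc_ne_t unfolding w1_def w2_def by simp
  define Rr where "Rr = V - P - {w1, w2}"
  have VP: "V - P = insert w1 (insert w2 Rr)" using w1V w2V unfolding Rr_def by auto
  have finR: "finite Rr" using finV unfolding Rr_def by simp
  have cardVP: "card (V - P) = card V - 2"
    using card_Diff_subset[OF _ PV] finV qsne finite_subset[OF PV] unfolding P_def by simp
  have cardR: "card Rr = card V - 4"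
  proof -
    have "card Rr = card (V - P) - card {w1, w2}"
      unfolding Rr_def using w1V w2V finV by (intro card_Diff_subset) auto
    then show ?thesis using cardVP w12 by simp
  qed
  have "(\<Prod>v\<in>V-P. (m - dd v)) = (m - 2) * ((m - 2) * (\<Prod>v\<in>Rr. (m - dd v)))"
    unfolding VP using finR w12 by (simp add: Rr_def dd_def)
  also have "(\<Prod>v\<in>Rr. (m - dd v)) = (\<Prod>v\<in>Rr. (m - 1))"
    by (rule prod.cong) (auto simp: Rr_def dd_def)
  also have "\<dots> = (m - 1) ^ (card V - 4)" using cardR by simp
  finally have pr: "(\<Prod>v\<in>V-P. (m - dd v)) = (m - 1) ^ (card V - 4) * (m - 2)^2"
    by (simp add: power2_eq_square)
  have "(m-1)^(card V - 4) * (m-2)^2 \<le> card (colS E L c0 P P) * (\<Prod>v\<in>V-P. (m - dd v))"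
    using one pr by simp
  also have "\<dots> \<le> card (colS E L c0 P V)" by (rule gr)
  finally show ?thesis using target unfolding V_def E_def by simp
qed

end



lemma card_V:
  assumes "l1 \<ge> 1" "l2 \<ge> 1" "l3 \<ge> 1"
  shows "card (theta_V l1 l2 l3) = l1 + l2 + l3 - 1"
proof -
  have eq: "theta_V l1 l2 l3 = {EndA, EndB} \<union> (Inner 1 ` {1..<l1} \<union> (Inner 2 ` {1..<l2} \<union> Inner 3 ` {1..<l3}))"
  proof (rule set_eqI)
    fix v
    show "v \<in> theta_V l1 l2 l3 \<longleftrightarrow> v \<in> {EndA, EndB} \<union> (Inner 1 ` {1..<l1} \<union> (Inner 2 ` {1..<l2} \<union> Inner 3 ` {1..<l3}))"
      unfolding theta_V_def path_len_def by (cases v) auto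
  qed
  have c1: "card (Inner a ` {1..<l}) = l - 1" for a l by (simp add: card_image inj_on_def)
  have "card (Inner 2 ` {1..<l2} \<union> Inner 3 ` {1..<l3}) = (l2 - 1) + (l3 - 1)"
    by (subst card_Un_disjoint) (auto simp: card_image inj_on_def)
  moreover have "card (Inner 1 ` {1..<l1} \<union> (Inner 2 ` {1..<l2} \<union> Inner 3 ` {1..<l3}))
     = (l1 - 1) + card (Inner 2 ` {1..<l2} \<union> Inner 3 ` {1..<l3})"
    by (subst card_Un_disjoint) (auto simp: card_image inj_on_def)
  moreover have "card ({EndA, EndB} \<union> (Inner 1 ` {1..<l1} \<union> (Inner 2 ` {1..<l2} \<union> Inner 3 ` {1..<l3})))
     = 2 + card (Inner 1 ` {1..<l1} \<union> (Inner 2 ` {1..<l2} \<union> Inner 3 ` {1..<l3}))"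
    by (subst card_Un_disjoint) auto
  ultimately show ?thesis unfolding eq using assms by simp
qed

theorem lemma2p3:
  fixes l1 l2 l3 m :: nat and L :: "tvert \<Rightarrow> 'c set" and q s :: tvert and x y :: 'c
  assumes "l1 \<ge> 1" and "l1 \<le> l2" and "l1 \<le> l3" and "l2 \<ge> 2" and "l3 \<ge> 2"
    and "m \<ge> 3"
    and "\<forall>v\<in>theta_V l1 l2 l3. finite (L v) \<and> card (L v) = m"
    and "{q, s} \<in> theta_E l1 l2 l3"
    and "x \<in> L q" and "y \<in> L s" and "x \<noteq> y"
  shows "card {f \<in> proper_L_colorings (theta_V l1 l2 l3) (theta_E l1 l2 l3) L. f q = x \<and> f s = y}
           \<ge> (m - 1) ^ (l1 + l2 + l3 - 5) * (m - 2) ^ 2"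
proof -
  obtain a jj where a: "{q,s} = {tpos l1 l2 l3 a jj, tpos l1 l2 l3 a (Suc jj)}" "a \<in> {1,2,3}"
    "jj < path_len l1 l2 l3 a"
    using assms(8) unfolding theta_E_def by blast
  have cV: "card (theta_V l1 l2 l3) - 4 = l1 + l2 + l3 - 5" using card_V assms(1-5) by simp
  have "th l1 l2 l3 a (if a = 1 then 2 else if a = 2 then 3 else 2) (if a = 1 then 3 else 1) jj"
    using a assms(1-5) by unfold_locales (auto simp: path_len_def)
  from th.final[OF this a(1) assms(6,7,9,10,11)] show ?thesis using cV by simp
qed


end
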